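(* Let $G$ be a graph, $X\subseteq T\subseteq V(G)$, $k'$ an integer, and let $(L^*,R^* )$ be a lean $(X,T,k')$-witness. Let $T'=(T\setminus L^* )\cup(L^*\cap R^* )$. Then the adhesion of $T'$ is at most $\max(|L^*\cap R^*|,\sigma(T))$, and $|T|-|T'|\ge \frac{|L^*\cap T|}{2\max\{1,|L^*\cap R^*|\}}$.
   Context: A vertex cut of $G$ is an ordered pair $(L,R)$ with $L\cup R=V(G)$, $L\setminus R,R\setminus L\ne\emptyset$ and no edge between $L\setminus R$ and $R\setminus L$. The adhesion $\sigma(Z)$ of a set $Z$ is the maximum over connected components $C$ of $G\setminus Z$ of $|N_G(C)|$. An $(X,T,k')$-witness is a vertex cut $(L,R)$ of $G$ with $|L\cap R|\le k'$, $|L\cap T|>|L\cap R|$, and $X\subseteq R$. It is lean if there exist $|L\cap R|$ vertex-disjoint paths in $G[L]$, one starting from each vertex of $L\cap R$, each ending at a vertex of $L\cap T$. *)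

theory Defs
  imports Complex_Main
begin

definition graph :: "'a set \<Rightarrow> ('a \<Rightarrow> 'a \<Rightarrow> bool) \<Rightarrow> bool" where
  "graph V E \<longleftrightarrow> finite V \<and> (\<forall>u v. E u v \<longrightarrow> E v u) \<and> (\<forall>u. \<not> E u u)
     \<and> (\<forall>u v. E u v \<longrightarrow> u \<in> V \<and> v \<in> V)"

definition reach_in :: "('a \<Rightarrow> 'a \<Rightarrow> bool) \<Rightarrow> 'a set \<Rightarrow> 'a \<Rightarrow> 'a \<Rightarrow> bool" where
  "reach_in E S = (\<lambda>u v. E u v \<and> u \<in> S \<and> v \<in> S)\<^sup>*\<^sup>*"

definition components :: "('a \<Rightarrow> 'a \<Rightarrow> bool) \<Rightarrow> 'a set \<Rightarrow> 'a set set" where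
  "components E S = {{y. reach_in E S x y} | x. x \<in> S}"

definition nbhd :: "'a set \<Rightarrow> ('a \<Rightarrow> 'a \<Rightarrow> bool) \<Rightarrow> 'a set \<Rightarrow> 'a set" where
  "nbhd V E C = {v \<in> V - C. \<exists>u \<in> C. E u v}"

definition adhesion :: "'a set \<Rightarrow> ('a \<Rightarrow> 'a \<Rightarrow> bool) \<Rightarrow> 'a set \<Rightarrow> nat" where
  "adhesion V E Z = Max (insert 0 {card (nbhd V E C) | C. C \<in> components E (V - Z)})"

definition vertex_cut :: "'a set \<Rightarrow> ('a \<Rightarrow> 'a \<Rightarrow> bool) \<Rightarrow> 'a set \<Rightarrow> 'a set \<Rightarrow> bool" where
  "vertex_cut V E L R \<longleftrightarrow> L \<union> R = V \<and> L - R \<noteq> {} \<and> R - L \<noteq> {}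
     \<and> (\<forall>u \<in> L - R. \<forall>v \<in> R - L. \<not> E u v)"

definition witness :: "'a set \<Rightarrow> ('a \<Rightarrow> 'a \<Rightarrow> bool) \<Rightarrow> 'a set \<Rightarrow> 'a set \<Rightarrow> int
      \<Rightarrow> 'a set \<Rightarrow> 'a set \<Rightarrow> bool" where
  "witness V E X T k L R \<longleftrightarrow> vertex_cut V E L R \<and> int (card (L \<inter> R)) \<le> k
     \<and> card (L \<inter> T) > card (L \<inter> R) \<and> X \<subseteq> R"

definition path_in :: "('a \<Rightarrow> 'a \<Rightarrow> bool) \<Rightarrow> 'a set \<Rightarrow> 'a list \<Rightarrow> bool" where
  "path_in E S p \<longleftrightarrow> p \<noteq> [] \<and> distinct p \<and> set p \<subseteq> S \<and> successively E p"

definition lean_witness :: "'a set \<Rightarrow> ('a \<Rightarrow> 'a \<Rightarrow> bool) \<Rightarrow> 'a set \<Rightarrow> 'a set \<Rightarrow> int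
      \<Rightarrow> 'a set \<Rightarrow> 'a set \<Rightarrow> bool" where
  "lean_witness V E X T k L R \<longleftrightarrow> witness V E X T k L R \<and>
     (\<exists>P :: 'a \<Rightarrow> 'a list.
        (\<forall>s \<in> L \<inter> R. path_in E L (P s) \<and> hd (P s) = s \<and> last (P s) \<in> L \<inter> T)
      \<and> (\<forall>s \<in> L \<inter> R. \<forall>t \<in> L \<inter> R. s \<noteq> t \<longrightarrow> set (P s) \<inter> set (P t) = {}))"

end

theory Submission imports Defs begin

lemma reach_step: "reach_in E S x u \<Longrightarrow> E u v \<Longrightarrow> u \<in> S \<Longrightarrow> v \<in> S \<Longrightarrow> reach_in E S x v"
  unfolding reach_in_def by (simp add: rtranclp.rtrancl_into_rtrancl)

lemma reach_refl: "reach_in E S x x"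
  unfolding reach_in_def by simp

lemma reach_in_S: "reach_in E S x y \<Longrightarrow> x \<in> S \<Longrightarrow> y \<in> S"
  unfolding reach_in_def by (induction rule: rtranclp_induct) auto

lemma reach_mono: "reach_in E S x y \<Longrightarrow> S \<subseteq> S' \<Longrightarrow> reach_in E S' x y"
  unfolding reach_in_def by (induction rule: rtranclp_induct) (auto intro: rtranclp.rtrancl_into_rtrancl)

lemma reach_stay:
  assumes "reach_in E S x y" "x \<in> A"
    "\<And>u v. u \<in> A \<Longrightarrow> u \<in> S \<Longrightarrow> v \<in> S \<Longrightarrow> E u v \<Longrightarrow> v \<in> A"
  shows "reach_in E (S \<inter> A) x y \<and> y \<in> A"
  using assms(1) unfolding reach_in_def
proof (induction rule: rtranclp_induct)
  case base then show ?case using assms(2) by simp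
next
  case (step y z)
  then have "z \<in> A" using assms(3) by blast
  with step show ?case by (auto intro: rtranclp.rtrancl_into_rtrancl)
qed

lemma finite_adh: "finite V \<Longrightarrow> finite {card (nbhd V E C) | C. C \<in> components E (V - Z)}"
proof -
  assume f: "finite V"
  have "components E (V - Z) = (\<lambda>x. {y. reach_in E (V - Z) x y}) ` (V - Z)"
    unfolding components_def by auto
  then have "finite (components E (V - Z))" using f by simp
  then show ?thesis by (simp add: setcompr_eq_image)
qed

lemma adhesion_le: "finite V \<Longrightarrow> (\<And>C. C \<in> components E (V - Z) \<Longrightarrow> card (nbhd V E C) \<le> m)
   \<Longrightarrow> adhesion V E Z \<le> m"
  unfolding adhesion_def using finite_adh[of V E Z] by (subst Max_le_iff) auto

lemma adhesion_ge: "finite V \<Longrightarrow> C \<in> components E (V - Z) \<Longrightarrow> card (nbhd V E C) \<le> adhesion V E Z"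
  unfolding adhesion_def using finite_adh[of V E Z] by (intro Max_ge) auto

lemma numeric:
  fixes a s :: nat assumes "a > s"
  shows "real a - real s \<ge> real a / (2 * real (max 1 s))"
proof (cases "s = 0")
  case True then show ?thesis by simp
next
  case False
  then have s1: "s \<ge> 1" by simp
  have "(2*s - 1) * (s+1) \<le> (2*s-1) * a" using assms by (intro mult_left_mono) auto
  moreover have "(2*s - 1) * (s+1) = 2*s*s + s - 1" using s1 by (simp add: algebra_simps)
  ultimately have "2*s*s \<le> (2*s-1)*a" using s1 by linarith
  then have "real (2*s*s) \<le> real ((2*s-1)*a)" by linarith
  then have h: "2*real s*real s \<le> (2*real s - 1)*real a" using s1 by (simp add: of_nat_diff)
  have "max 1 s = s" using s1 by simp
  then show ?thesis using s1 h by (simp add: field_simps)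
qed


lemma adh_part:
  fixes V :: "'a set" and E :: "'a \<Rightarrow> 'a \<Rightarrow> bool"
    and X T L R :: "'a set" and k :: int
  assumes g: "graph V E"
    and TV: "T \<subseteq> V"
    and lw: "lean_witness V E X T k L R"
  shows "adhesion V E ((T - L) \<union> (L \<inter> R)) \<le> max (card (L \<inter> R)) (adhesion V E T)"
proof -
  define T' where "T' = (T - L) \<union> (L \<inter> R)"
  have fV: "finite V" and sym: "\<And>u v. E u v \<Longrightarrow> E v u" and EV: "\<And>u v. E u v \<Longrightarrow> u \<in> V \<and> v \<in> V"
    using g unfolding graph_def by auto
  have vc: "vertex_cut V E L R" using lw unfolding lean_witness_def witness_def by auto
  then have LRV: "L \<union> R = V" and cut: "\<And>u v. u \<in> L - R \<Longrightarrow> v \<in> R - L \<Longrightarrow> \<not> E u v"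
    unfolding vertex_cut_def by auto
  obtain P where P1: "\<And>s. s \<in> L \<inter> R \<Longrightarrow> path_in E L (P s) \<and> hd (P s) = s \<and> last (P s) \<in> L \<inter> T"
    and P2: "\<And>s t. s \<in> L \<inter> R \<Longrightarrow> t \<in> L \<inter> R \<Longrightarrow> s \<noteq> t \<Longrightarrow> set (P s) \<inter> set (P t) = {}"
    using lw unfolding lean_witness_def by blast
  show ?thesis unfolding T'_def[symmetric]
  proof (rule adhesion_le[OF fV])
    fix C assume "C \<in> components E (V - T')"
    then obtain x where x: "x \<in> V - T'" and C: "C = {y. reach_in E (V - T') x y}"
      unfolding components_def by auto
    have NT': "nbhd V E C \<subseteq> T'"
    proof
      fix v assume "v \<in> nbhd V E C"
      then obtain u where "u \<in> C" "E u v" "v \<in> V" "v \<notin> C" unfolding nbhd_def by auto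
      moreover have "u \<in> V - T'" using \<open>u \<in> C\<close> C x reach_in_S by fastforce
      ultimately show "v \<in> T'" using C reach_step[of E "V - T'" x u v] by auto
    qed
    show "card (nbhd V E C) \<le> max (card (L \<inter> R)) (adhesion V E T)"
    proof (cases "x \<in> L")
      case True
      then have xLR: "x \<in> L - R" using x T'_def by auto
      have CL: "C \<subseteq> L - R"
      proof
        fix y assume "y \<in> C"
        then have "reach_in E (V - T') x y" using C by simp
        then show "y \<in> L - R"
        proof (rule reach_stay[THEN conjunct2, OF _ xLR])
          fix u v assume "u \<in> L - R" "u \<in> V - T'" "v \<in> V - T'" "E u v"
          then show "v \<in> L - R" using cut[of u v] LRV unfolding T'_def by auto
        qed
      qed
      have "nbhd V E C \<subseteq> L"
      proof
        fix v assume "v \<in> nbhd V E C"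
        then obtain u where "u \<in> C" "E u v" "v \<in> V" unfolding nbhd_def by auto
        then show "v \<in> L" using CL cut LRV by blast
      qed
      with NT' have "nbhd V E C \<subseteq> L \<inter> R" unfolding T'_def by blast
      moreover have "finite (L \<inter> R)" using fV LRV by (metis finite_Int finite_Un)
      ultimately have "card (nbhd V E C) \<le> card (L \<inter> R)" by (rule card_mono[rotated])
      then show ?thesis by simp
    next
      case False
      then have xRL: "x \<in> R - L" using x LRV by auto
      then have x0: "x \<in> V - T" using x T'_def by auto
      define D where "D = {y. reach_in E (V - T) x y}"
      have Dc: "D \<in> components E (V - T)" unfolding D_def components_def using x0 by auto
      have DVT: "D \<subseteq> V - T" unfolding D_def using x0 reach_in_S by fastforce
      have CD: "C \<subseteq> D"
      proof
        fix y assume "y \<in> C"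
        then have "reach_in E (V - T') x y" using C by simp
        then have "reach_in E ((V - T') \<inter> (R - L)) x y"
        proof (rule reach_stay[THEN conjunct1, OF _ xRL])
          fix u v assume "u \<in> R - L" "u \<in> V - T'" "v \<in> V - T'" "E u v"
          then show "v \<in> R - L" using cut[of v u] sym[of u v] LRV unfolding T'_def by auto
        qed
        then have "reach_in E (V - T) x y" by (rule reach_mono) (auto simp: T'_def)
        then show "y \<in> D" unfolding D_def by simp
      qed
      define f where "f v = (if v \<in> T then v else P v ! (LEAST i. i < length (P v) \<and> P v ! i \<in> T))" for v
      have fN: "f v \<in> nbhd V E D \<and> (v \<notin> T \<longrightarrow> f v \<in> set (P v) \<and> v \<in> L \<inter> R)" if v: "v \<in> nbhd V E C" for v
      proof -
        obtain u where u: "u \<in> C" "E u v" "v \<in> V" using v unfolding nbhd_def by auto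
        have vT': "v \<in> T'" using v NT' by auto
        show ?thesis
        proof (cases "v \<in> T")
          case True
          then show ?thesis using u CD DVT unfolding f_def nbhd_def by auto
        next
          case False
          then have vS: "v \<in> L \<inter> R" using vT' T'_def by auto
          have "reach_in E (V - T) x u" using u CD D_def by auto
          then have vD: "v \<in> D" using reach_step[of E "V - T" x u v] u CD DVT False
            unfolding D_def by auto
          define p where "p = P v"
          have pp: "path_in E L p" "hd p = v" "last p \<in> L \<inter> T" using P1[OF vS] p_def by auto
          then have pne: "p \<noteq> []" and succ: "successively E p" and pL: "set p \<subseteq> L"
            unfolding path_in_def by auto
          define n where "n = (LEAST i. i < length p \<and> p ! i \<in> T)"
          have ex: "length p - 1 < length p \<and> p ! (length p - 1) \<in> T"
            using pne pp(3) by (simp add: last_conv_nth)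
          have n1: "n < length p \<and> p ! n \<in> T" unfolding n_def using ex by (rule LeastI)
          have n2: "\<And>j. j < n \<Longrightarrow> p ! j \<notin> T"
            using n1 unfolding n_def by (metis (no_types, lifting) dual_order.strict_trans not_less_Least)
          have p0: "p ! 0 = v" using pne pp(2) by (simp add: hd_conv_nth)
          have n0: "n > 0" using n1 p0 False by (cases n) auto
          have pV: "\<And>j. j < length p \<Longrightarrow> p ! j \<in> V" using pL LRV by auto
          have inD: "\<And>j. j < n \<Longrightarrow> p ! j \<in> D"
          proof -
            fix j show "j < n \<Longrightarrow> p ! j \<in> D"
            proof (induction j)
              case 0 then show ?case using p0 vD by simp
            next
              case (Suc j)
              then have "p ! j \<in> D" by simp
              moreover have "E (p ! j) (p ! Suc j)" using successively_nth[OF succ] Suc n1 by simp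
              moreover have "p ! Suc j \<in> V - T" using n2 Suc n1 pV by simp
              ultimately show ?case using DVT unfolding D_def
                using reach_step[of E "V - T" x "p ! j" "p ! Suc j"] by auto
            qed
          qed
          have "E (p ! (n - 1)) (p ! n)" using successively_nth[OF succ, of "n - 1"] n0 n1 by simp
          moreover have "p ! (n - 1) \<in> D" using inD n0 by simp
          moreover have "p ! n \<notin> D" using n1 DVT by auto
          moreover have "p ! n \<in> V" using pV n1 by simp
          ultimately have "p ! n \<in> nbhd V E D" unfolding nbhd_def by auto
          moreover have "f v = p ! n" using False unfolding f_def p_def n_def by simp
          moreover have "p ! n \<in> set p" using n1 by simp
          ultimately show ?thesis using vS p_def False by auto
        qed
      qed
      have inj: "inj_on f (nbhd V E C)"
      proof (rule inj_onI)
        fix v1 v2 assume v1: "v1 \<in> nbhd V E C" and v2: "v2 \<in> nbhd V E C" and eq: "f v1 = f v2"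
        have hdin: "s \<in> set (P s)" if "s \<in> L \<inter> R" for s
          using P1[OF that] unfolding path_in_def by (metis hd_in_set)
        have setL: "set (P s) \<subseteq> L" if "s \<in> L \<inter> R" for s
          using P1[OF that] unfolding path_in_def by simp
        have mix: False if a: "a \<in> nbhd V E C" "a \<in> T" and b: "b \<in> nbhd V E C" "b \<notin> T" and e: "f a = f b" for a b
        proof -
          have fa: "f a = a" using a f_def by simp
          have fb: "f b \<in> set (P b)" "b \<in> L \<inter> R" using fN[OF b(1)] b(2) by auto
          have "a \<in> T'" using a NT' by auto
          then consider "a \<in> T - L" | "a \<in> L \<inter> R" unfolding T'_def by auto
          then show False
          proof cases
            case 1 then show ?thesis using fa fb e setL[OF fb(2)] by auto
          next
            case 2
            then have "a \<noteq> b" using a b by auto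
            then show ?thesis using P2[OF 2 fb(2) \<open>a \<noteq> b\<close>] hdin[OF 2] fa fb(1) e by auto
          qed
        qed
        show "v1 = v2"
        proof (cases "v1 \<in> T"; cases "v2 \<in> T")
          assume "v1 \<in> T" "v2 \<in> T" then show ?thesis using eq f_def by simp
        next
          assume "v1 \<in> T" "v2 \<notin> T" then show ?thesis using mix[of v1 v2] v1 v2 eq by simp
        next
          assume "v1 \<notin> T" "v2 \<in> T" then show ?thesis using mix[of v2 v1] v1 v2 eq by simp
        next
          assume n: "v1 \<notin> T" "v2 \<notin> T"
          then have "f v1 \<in> set (P v1)" "f v2 \<in> set (P v2)" "v1 \<in> L \<inter> R" "v2 \<in> L \<inter> R"
            using fN v1 v2 by auto
          then show ?thesis using P2[of v1 v2] eq by auto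
        qed
      qed
      have "finite (nbhd V E D)" using fV unfolding nbhd_def by simp
      then have "card (nbhd V E C) \<le> card (nbhd V E D)"
        using card_inj_on_le[OF inj] fN by (meson image_subsetI)
      also have "\<dots> \<le> adhesion V E T" by (rule adhesion_ge[OF fV Dc])
      finally show ?thesis by simp
    qed
  qed
qed

theorem lemma5p8:
  fixes V :: "'a set" and E :: "'a \<Rightarrow> 'a \<Rightarrow> bool"
    and X T L R :: "'a set" and k :: int
  assumes "graph V E"
    and "X \<subseteq> T" and "T \<subseteq> V"
    and "lean_witness V E X T k L R"
  shows "adhesion V E ((T - L) \<union> (L \<inter> R)) \<le> max (card (L \<inter> R)) (adhesion V E T)
       \<and> real (card T) - real (card ((T - L) \<union> (L \<inter> R)))
           \<ge> real (card (L \<inter> T)) / (2 * real (max 1 (card (L \<inter> R))))"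
proof (rule conjI)
  show "adhesion V E ((T - L) \<union> (L \<inter> R)) \<le> max (card (L \<inter> R)) (adhesion V E T)"
    by (rule adh_part[OF assms(1) assms(3) assms(4)])
next
  have fV: "finite V" using assms(1) unfolding graph_def by simp
  have LRV: "L \<union> R = V" and gt: "card (L \<inter> T) > card (L \<inter> R)"
    using assms(4) unfolding lean_witness_def witness_def vertex_cut_def by auto
  have fT: "finite T" using fV assms(3) finite_subset by blast
  have fL: "finite L" using fV LRV by (metis finite_Un)
  have "card T = card (T - L) + card (L \<inter> T)"
    using fT by (metis Int_commute card_Diff_subset_Int card_Int_Diff add.commute)
  moreover have "card ((T - L) \<union> (L \<inter> R)) = card (T - L) + card (L \<inter> R)"
    using fT fL by (intro card_Un_disjoint) auto
  ultimately have "real (card T) - real (card ((T - L) \<union> (L \<inter> R))) = real (card (L \<inter> T)) - real (card (L \<inter> R))"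
    by simp
  then show "real (card T) - real (card ((T - L) \<union> (L \<inter> R)))
           \<ge> real (card (L \<inter> T)) / (2 * real (max 1 (card (L \<inter> R))))"
    using numeric[OF gt] by simp
qed

end
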